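(* Let $N\ge 1$ and consider a network with feature tensors $X_0,X_1,\dots,X_N$, where $X_L\in\mathbb{R}^{K\times \mathrm{rows}_L\times \mathrm{cols}_L}$, defined for $L=1,\dots,N$ by $$U_L=\mathrm{ReLU}\Big(\big(1-\tfrac1L\big)X_{L-1}+\tfrac1L\tanh\big(F_L(X_{L-1})\big)\Big),\qquad X_L=M_L(U_L),$$ where each $F_L:\mathbb{R}^{K\times\mathrm{rows}_{L-1}\times\mathrm{cols}_{L-1}}\to\mathbb{R}^{K\times\mathrm{rows}_{L-1}\times\mathrm{cols}_{L-1}}$ is an arbitrary map, $\mathrm{ReLU},\tanh$ act entrywise, and each $M_L$ is either the identity or a non-overlapping (stride = kernel) spatial max pooling, channelwise. Assume $\mathrm{rows}_T$ divides $\mathrm{rows}_L$ and $\mathrm{cols}_T$ divides $\mathrm{cols}_L$ whenever $L\le T$. For $0\le L\le T\le N$ define rescaled maps $S^{(T)}_0=0$ and, for $L\ge1$, $$S^{(T)}_L=\frac{L}{N}\,\mathrm{Pool}(X_L,T),\qquad \mathrm{Pool}(X_L,T)=\mathrm{MaxPool}\Big(X_L,\ \mathrm{ker}=\big(\tfrac{\mathrm{rows}_L}{\mathrm{rows}_T},\tfrac{\mathrm{cols}_L}{\mathrm{cols}_T}\big)\Big)$$ (non-overlapping, channelwise). Then (bounded increment through depth) for every target layer $T$ with $1\le T\le N$, every $1\le L\le T$, every channel $k$ and every position $(x,y)$, $$\Big|S^{(T)}_{L,k}(x,y)-S^{(T)}_{L-1,k}(x,y)\Big|\le \delta,\qquad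 \delta=\frac1N.$$
   Context: This is the "feature-aligned" CNN with dampened skip connections: layer $L$ mixes the previous features with weight $1-\beta$ and a $\tanh$-bounded block output with weight $\beta=1/L$, followed by ReLU and optionally max pooling. $N$ is the total number of layers (denoted $N_L$ in the paper). All feature tensors have the same number $K$ of channels; $X_0$ is an arbitrary real tensor (the projected input). *)

theory Defs
  imports Complex_Main
begin

text \<open>A feature tensor with K channels is represented as a function
  channel => row => column => real; only entries with indices below the
  current sizes (K, rows, cols) are meaningful.\<close>
type_synonym tensor = "nat \<Rightarrow> nat \<Rightarrow> nat \<Rightarrow> real"

definition relu :: "real \<Rightarrow> real" where
  "relu r = max 0 r"

definition maxpool :: "nat \<Rightarrow> nat \<Rightarrow> tensor \<Rightarrow> tensor" where
  "maxpool a b X = (\<lambda>k x y. Max {X k (a * x + i) (b * y + j) | i j. i < a \<and> j < b})"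

definition block_update :: "nat \<Rightarrow> (tensor \<Rightarrow> tensor) \<Rightarrow> tensor \<Rightarrow> tensor" where
  "block_update L FL Xprev = (\<lambda>k x y.
      relu ((1 - 1 / real L) * Xprev k x y + (1 / real L) * tanh (FL Xprev k x y)))"

definition pool_to :: "(nat \<Rightarrow> nat) \<Rightarrow> (nat \<Rightarrow> nat) \<Rightarrow> (nat \<Rightarrow> tensor) \<Rightarrow> nat \<Rightarrow> nat \<Rightarrow> tensor" where
  "pool_to rows cols X L T = maxpool (rows L div rows T) (cols L div cols T) (X L)"

definition rescaled :: "nat \<Rightarrow> (nat \<Rightarrow> nat) \<Rightarrow> (nat \<Rightarrow> nat) \<Rightarrow> (nat \<Rightarrow> tensor) \<Rightarrow> nat \<Rightarrow> nat \<Rightarrow> tensor" where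
  "rescaled N rows cols X T L =
     (if L = 0 then (\<lambda>k x y. 0)
      else (\<lambda>k x y. real L / real N * pool_to rows cols X L T k x y))"

end

theory Submission
  imports Defs
begin

lemma maxpool_set: "{U k (a*x+i) (b*y+j) | i j. i<a \<and> j<b} = (\<lambda>(i,j). U k (a*x+i) (b*y+j)) ` ({..<a}\<times>{..<b})"
  by auto

lemma maxpool_ub: "i<a \<Longrightarrow> j<b \<Longrightarrow> U k (a*x+i) (b*y+j) \<le> maxpool a b U k x y"
  unfolding maxpool_def maxpool_set by (rule Max_ge) auto

lemma maxpool_wit: "0<a \<Longrightarrow> 0<b \<Longrightarrow> \<exists>i<a. \<exists>j<b. maxpool a b U k x y = U k (a*x+i) (b*y+j)"
proof -
  assume "0<a" "0<b"
  then have ne: "(\<lambda>(i,j). U k (a*x+i) (b*y+j)) ` ({..<a}\<times>{..<b}) \<noteq> {}" by auto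
  have "Max ((\<lambda>(i,j). U k (a*x+i) (b*y+j)) ` ({..<a}\<times>{..<b})) \<in> (\<lambda>(i,j). U k (a*x+i) (b*y+j)) ` ({..<a}\<times>{..<b})"
    by (rule Max_in) (use ne in auto)
  then show ?thesis unfolding maxpool_def maxpool_set by auto
qed

lemma lt_aux: "(i::nat) < A \<Longrightarrow> i' < a \<Longrightarrow> a*i+i' < a*A"
proof -
  assume "i<A" "i'<a"
  then have "a*i+i' < a*(i+1)" by simp
  also have "\<dots> \<le> a*A" using \<open>i<A\<close> by (intro mult_le_mono2) simp
  finally show ?thesis .
qed

lemma maxpool_comp:
  assumes "0<a" "0<b" "0<A" "0<B"
  shows "maxpool A B (maxpool a b U) k x y = maxpool (a*A) (b*B) U k x y"
proof (rule antisym)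
  obtain i j where ij: "i<A" "j<B" "maxpool A B (maxpool a b U) k x y = maxpool a b U k (A*x+i) (B*y+j)"
    using maxpool_wit[OF assms(3,4)] by blast
  obtain i' j' where ij': "i'<a" "j'<b" "maxpool a b U k (A*x+i) (B*y+j) = U k (a*(A*x+i)+i') (b*(B*y+j)+j')"
    using maxpool_wit[OF assms(1,2)] by blast
  have e1: "a*(A*x+i)+i' = (a*A)*x + (a*i+i')" "b*(B*y+j)+j' = (b*B)*y + (b*j+j')" by (simp_all add: algebra_simps)
  show "maxpool A B (maxpool a b U) k x y \<le> maxpool (a*A) (b*B) U k x y"
    unfolding ij(3) ij'(3) e1 by (rule maxpool_ub) (use lt_aux ij ij' in auto)
next
  have p1: "0 < a*A" "0<b*B" using assms by auto
  obtain i2 j2 where w: "i2<a*A" "j2<b*B" "maxpool (a*A) (b*B) U k x y = U k (a*A*x+i2) (b*B*y+j2)"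
    using maxpool_wit[OF p1] by blast
  define i where "i = i2 div a"
  define i' where "i' = i2 mod a"
  define j where "j = j2 div b"
  define j' where "j' = j2 mod b"
  have "i < A" using w(1) assms unfolding i_def i'_def j_def j'_def by (simp add: div_less_iff_less_mult mult.commute)
  have "j < B" using w(2) assms unfolding i_def i'_def j_def j'_def by (simp add: div_less_iff_less_mult mult.commute)
  have "i' < a" "j' < b" using assms unfolding i_def i'_def j_def j'_def by auto
  have e: "a*A*x+i2 = a*(A*x+i)+i'" "b*B*y+j2 = b*(B*y+j)+j'"
    unfolding i_def i'_def j_def j'_def by (simp_all add: algebra_simps)
  have "maxpool (a*A) (b*B) U k x y \<le> maxpool a b U k (A*x+i) (B*y+j)"
    unfolding w(3) e by (rule maxpool_ub) fact+
  also have "\<dots> \<le> maxpool A B (maxpool a b U) k x y" by (rule maxpool_ub) fact+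
  finally show "maxpool (a*A) (b*B) U k x y \<le> maxpool A B (maxpool a b U) k x y" .
qed

lemma maxpool_lip:
  assumes "0<a" "0<b" "\<alpha> \<ge> 0" "\<beta> \<ge> 0" "\<And>i j. \<bar>\<alpha> * U k i j - \<beta> * V k i j\<bar> \<le> 1"
  shows "\<bar>\<alpha> * maxpool a b U k x y - \<beta> * maxpool a b V k x y\<bar> \<le> 1"
proof -
  obtain i j where ij: "i<a" "j<b" "maxpool a b U k x y = U k (a*x+i) (b*y+j)"
    using maxpool_wit[OF assms(1,2)] by blast
  obtain i' j' where ij': "i'<a" "j'<b" "maxpool a b V k x y = V k (a*x+i') (b*y+j')"
    using maxpool_wit[OF assms(1,2)] by blast
  have "V k (a*x+i) (b*y+j) \<le> maxpool a b V k x y" by (rule maxpool_ub) fact+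
  then have 1: "\<beta> * V k (a*x+i) (b*y+j) \<le> \<beta> * maxpool a b V k x y" using assms(4) by (rule mult_left_mono)
  have "U k (a*x+i') (b*y+j') \<le> maxpool a b U k x y" by (rule maxpool_ub) fact+
  then have 2: "\<alpha> * U k (a*x+i') (b*y+j') \<le> \<alpha> * maxpool a b U k x y" using assms(3) by (rule mult_left_mono)
  have 3: "\<alpha> * maxpool a b U k x y = \<alpha> * U k (a*x+i) (b*y+j)" "\<beta> * maxpool a b V k x y = \<beta> * V k (a*x+i') (b*y+j')"
    using ij(3) ij'(3) by simp_all
  show ?thesis using 1 2 3 assms(5)[of "a*x+i" "b*y+j"] assms(5)[of "a*x+i'" "b*y+j'"] by linarith
qed

lemma maxpool_nonneg: "0<a \<Longrightarrow> 0<b \<Longrightarrow> (\<And>i j. 0 \<le> U k i j) \<Longrightarrow> 0 \<le> maxpool a b U k x y"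
  using maxpool_wit[of a b U k x y] by auto

lemma bu_step:
  assumes "L \<ge> 1" "c = real (L-1) * v" "c \<ge> 0" and that: "\<bar>t\<bar> < 1"
  shows "\<bar>real L * relu ((1 - 1 / real L) * v + (1 / real L) * t) - c\<bar> \<le> 1"
proof -
  have L: "real L > 0" using assms by simp
  have "real L * ((1 - 1 / real L) * v + (1 / real L) * t) = c + t"
  proof -
    have "real (L-1) = real L - 1" using assms(1) by (simp add: of_nat_diff)
    then have "c = real L * v - v" using assms(2) by (simp add: algebra_simps)
    have "real L * ((1 - 1 / real L) * v + (1 / real L) * t) = (real L - 1) * v + t"
      using L by (simp add: field_simps)
    then show ?thesis using \<open>c = real L * v - v\<close> by (simp add: algebra_simps)
  qed
  moreover have "real L * relu r = relu (real L * r)" for r using L unfolding relu_def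
    by (simp add: max_mult_distrib_left) 
  ultimately show ?thesis using that assms(3) unfolding relu_def by auto
qed

theorem theorem2:
  fixes N K :: nat
    and rows cols :: "nat \<Rightarrow> nat"
    and X :: "nat \<Rightarrow> tensor"
    and F :: "nat \<Rightarrow> tensor \<Rightarrow> tensor"
    and pooled :: "nat \<Rightarrow> bool"
  assumes N_pos: "N \<ge> 1"
    and rows_pos: "\<And>L. L \<le> N \<Longrightarrow> rows L > 0"
    and cols_pos: "\<And>L. L \<le> N \<Longrightarrow> cols L > 0"
    and rows_dvd: "\<And>L T. L \<le> T \<Longrightarrow> T \<le> N \<Longrightarrow> rows T dvd rows L"
    and cols_dvd: "\<And>L T. L \<le> T \<Longrightarrow> T \<le> N \<Longrightarrow> cols T dvd cols L"
    and ident_dims: "\<And>L. 1 \<le> L \<Longrightarrow> L \<le> N \<Longrightarrow> \<not> pooled L \<Longrightarrow>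
                       rows L = rows (L - 1) \<and> cols L = cols (L - 1)"
    and layer: "\<And>L. 1 \<le> L \<Longrightarrow> L \<le> N \<Longrightarrow>
        X L = (if pooled L
               then maxpool (rows (L - 1) div rows L) (cols (L - 1) div cols L)
                      (block_update L (F L) (X (L - 1)))
               else block_update L (F L) (X (L - 1)))"
  shows "\<forall>T L k x y. 1 \<le> T \<and> T \<le> N \<and> 1 \<le> L \<and> L \<le> T \<and> k < K \<and> x < rows T \<and> y < cols T \<longrightarrow>
           \<bar>rescaled N rows cols X T L k x y - rescaled N rows cols X T (L - 1) k x y\<bar> \<le> 1 / real N"
  proof (intro allI impI)
  fix T L k x y
  assume h: "1 \<le> T \<and> T \<le> N \<and> 1 \<le> L \<and> L \<le> T \<and> k < K \<and> x < rows T \<and> y < cols T"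
  then have hL: "1 \<le> L" "L \<le> N" "L \<le> T" "T \<le> N" by auto
  have rp: "rows L > 0" "rows (L-1) > 0" "rows T > 0" "cols L > 0" "cols (L-1) > 0" "cols T > 0"
    using rows_pos cols_pos hL by auto
  have d1: "rows L dvd rows (L-1)" "cols L dvd cols (L-1)" using rows_dvd cols_dvd hL by auto
  have d2: "rows T dvd rows L" "cols T dvd cols L" using rows_dvd cols_dvd hL by auto
  define a where "a = rows (L-1) div rows L"
  define b where "b = cols (L-1) div cols L"
  define A where "A = rows L div rows T"
  define B where "B = cols L div cols T"
  have pos: "0<a" "0<b" "0<A" "0<B" using rp d1 d2 unfolding a_def b_def A_def B_def
    by (auto simp: dvd_div_eq_0_iff dvd_imp_le intro!: div_greater_zero_iff[THEN iffD2])
  have eA: "a*A = rows (L-1) div rows T" "b*B = cols (L-1) div cols T"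
  proof -
    obtain p where p: "rows (L-1) = rows L * p" using d1 by (auto elim!: dvdE)
    obtain q where q: "rows L = rows T * q" using d2 by (auto elim!: dvdE)
    obtain p' where p': "cols (L-1) = cols L * p'" using d1 by (auto elim!: dvdE)
    obtain q' where q': "cols L = cols T * q'" using d2 by (auto elim!: dvdE)
    have "a = p" "A = q" "b = p'" "B = q'" using rp unfolding a_def b_def A_def B_def p q p' q' by simp_all
    then show "a*A = rows (L-1) div rows T" "b*B = cols (L-1) div cols T"
      using rp unfolding p q p' q' by (simp_all add: mult.assoc mult.commute)
  qed
  define U where "U = block_update L (F L) (X (L-1))"
  have nonneg: "0 \<le> X (L-1) k i j" if "L \<ge> 2" for i j
  proof -
    have l1: "1 \<le> L-1" "L-1 \<le> N" using that hL by auto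
    have u: "0 \<le> block_update (L-1) (F (L-1)) (X (L-1-1)) k i' j'" for i' j'
      unfolding block_update_def relu_def by simp
    show ?thesis
    proof (cases "pooled (L-1)")
      case True
      have p: "0 < rows (L-1-1) div rows (L-1)" "0 < cols (L-1-1) div cols (L-1)"
        using rows_dvd[of "L-1-1" "L-1"] cols_dvd[of "L-1-1" "L-1"] rows_pos[of "L-1"] rows_pos[of "L-1-1"]
          cols_pos[of "L-1"] cols_pos[of "L-1-1"] l1
        by (auto simp: dvd_div_eq_0_iff intro!: div_greater_zero_iff[THEN iffD2] dvd_imp_le)
      show ?thesis using layer[OF l1] True maxpool_nonneg[where U="block_update (L-1) (F (L-1)) (X (L-1-1))", OF p u] by simp
    next
      case False
      then show ?thesis using layer[OF l1] u by simp
    qed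
  qed
  have pt: "\<bar>real L * U k i j - real (L-1) * X (L-1) k i j\<bar> \<le> 1" for i j
    unfolding U_def block_update_def
  proof (rule bu_step[OF hL(1) refl])
    show "0 \<le> real (L - 1) * X (L - 1) k i j"
    proof (cases "L \<ge> 2")
      case True then show ?thesis using nonneg by simp
    next
      case False then have "L = 1" using hL by simp
      then show ?thesis by simp
    qed
    show "\<bar>tanh (F L (X (L - 1)) k i j)\<bar> < 1" using tanh_real_lt_1 tanh_real_gt_neg1 by (simp add: abs_less_iff)
  qed
  have pXL: "pool_to rows cols X L T k x y = maxpool (a*A) (b*B) U k x y"
  proof (cases "pooled L")
    case True
    then show ?thesis unfolding pool_to_def using layer[OF hL(1,2)] maxpool_comp[OF pos]
      unfolding a_def b_def A_def B_def U_def by simp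
  next
    case False
    then have "rows L = rows (L-1)" "cols L = cols (L-1)" using ident_dims hL by auto
    then have "a = 1" "b = 1" using rp unfolding a_def b_def by simp_all
    then show ?thesis unfolding pool_to_def using layer[OF hL(1,2)] False
      unfolding A_def B_def U_def by simp
  qed
  have r1: "rescaled N rows cols X T L k x y = real L / real N * maxpool (a*A) (b*B) U k x y"
    using hL pXL unfolding rescaled_def by simp
  have r0: "rescaled N rows cols X T (L-1) k x y = real (L-1) / real N * maxpool (a*A) (b*B) (X (L-1)) k x y"
    unfolding rescaled_def pool_to_def eA by simp
  have pos2: "0 < a*A" "0 < b*B" using pos by auto
  have m: "\<bar>real L * maxpool (a*A) (b*B) U k x y - real (L-1) * maxpool (a*A) (b*B) (X (L-1)) k x y\<bar> \<le> 1"
    by (rule maxpool_lip[OF pos2]) (use pt in auto)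
  have Np: "real N > 0" using N_pos by simp
  have "rescaled N rows cols X T L k x y - rescaled N rows cols X T (L - 1) k x y
     = (real L * maxpool (a*A) (b*B) U k x y - real (L-1) * maxpool (a*A) (b*B) (X (L-1)) k x y) / real N"
    unfolding r1 r0 by (simp add: diff_divide_distrib)
  then show "\<bar>rescaled N rows cols X T L k x y - rescaled N rows cols X T (L - 1) k x y\<bar> \<le> 1 / real N"
    using m Np by (simp add: divide_right_mono)
qed

end
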